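(* Let $n\geq 2$ be a natural number and let $R\subseteq I=[0,1]$ be a nonempty perfect (closed, without isolated points) subset. Then the $n$-Split Interval $S_n(R)$ contains a subspace homeomorphic to the $n$-Split Interval $S_n(I)$.
   Context: For $n\geq 2$ and a perfect set $R\subseteq[0,1]$, the $n$-Split Interval of $R$, $S_n(R)$, is the set $R\times\{0,\ldots,n-1\}$ with the topology in which the points $(x,i)$ with $i\in\{2,\ldots,n-1\}$ are isolated, and the points $(x,0)$ and $(x,1)$ have respective basic neighbourhoods $\{(x,0)\}\cup\{(y,i): y\in R,\ z_0<y<x,\ i\in\{0,\ldots,n-1\}\}$ and $\{(x,1)\}\cup\{(y,i): y\in R,\ x<y<z_1,\ i\in\{0,\ldots,n-1\}\}$, where $z_0,z_1\in R$ with $z_0<x<z_1$; if $x=\min R$ then $(x,0)$ is isolated, and if $x=\max R$ then $(x,1)$ is isolated. $S_n(I)$ is $S_n(R)$ for $R=I=[0,1]$. *)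

theory Defs
  imports "HOL-Analysis.Analysis"
begin

definition perfect_set :: "real set \<Rightarrow> bool" where
  "perfect_set R \<longleftrightarrow> closed R \<and> (\<forall>x\<in>R. x islimpt R)"

definition split_basis :: "nat \<Rightarrow> real set \<Rightarrow> (real \<times> nat) set set" where
  "split_basis n R =
     {{(x, i)} | x i. x \<in> R \<and> 2 \<le> i \<and> i < n}
   \<union> {{(x, 0)} | x. x \<in> R \<and> x = Inf R}
   \<union> {{(x, 0)} \<union> {(y, i) | y i. y \<in> R \<and> z0 < y \<and> y < x \<and> i < n} | x z0.
        x \<in> R \<and> z0 \<in> R \<and> z0 < x}
   \<union> {{(x, 1)} | x. x \<in> R \<and> x = Sup R}
   \<union> {{(x, 1)} \<union> {(y, i) | y i. y \<in> R \<and> x < y \<and> y < z1 \<and> i < n} | x z1.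
        x \<in> R \<and> z1 \<in> R \<and> x < z1}"

definition split_interval :: "nat \<Rightarrow> real set \<Rightarrow> (real \<times> nat) topology" where
  "split_interval n R = topology_generated_by (split_basis n R)"

end

theory Submission imports Defs begin


definition mid :: "real set \<Rightarrow> real \<Rightarrow> real \<Rightarrow> real" where
  "mid R a b = (SOME c. c \<in> R \<and> a < c \<and> c < b \<and> R \<inter> {a<..<c} \<noteq> {} \<and> R \<inter> {c<..<b} \<noteq> {})"

lemma three_sorted:
  fixes x y z :: real
  assumes "x \<noteq> y" "x \<noteq> z" "y \<noteq> z" "x \<in> S" "y \<in> S" "z \<in> S"
  shows "\<exists>p q r. p \<in> S \<and> q \<in> S \<and> r \<in> S \<and> p < q \<and> q < r"
proof -
  consider "x<y" "y<z" | "x<z" "z<y" | "y<x" "x<z" | "y<z" "z<x" | "z<x" "x<y" | "z<y" "y<x"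
    using assms(1-3) by (auto simp: neq_iff)
  then show ?thesis using assms(4-6) by cases blast+
qed

lemma mid_ex:
  fixes R :: "real set" and a b :: real
  assumes perf: "\<forall>x\<in>R. x islimpt R" and ab: "R \<inter> {a<..<b} \<noteq> {}"
  shows "\<exists>c. c \<in> R \<and> a < c \<and> c < b \<and> R \<inter> {a<..<c} \<noteq> {} \<and> R \<inter> {c<..<b} \<noteq> {}"
proof -
  obtain e where e: "e \<in> R" "a < e" "e < b" using ab by auto
  have l: "e islimpt R" using perf e by auto
  obtain e1 where e1: "e1 \<in> R" "e1 \<in> {a<..<b}" "e1 \<noteq> e"
    using islimptE[OF l, of "{a<..<b}"] e open_greaterThanLessThan[of a b] by auto
  have o: "open ({a<..<b} - {e1})" by (simp add: open_Diff)
  obtain e2 where e2: "e2 \<in> R" "e2 \<in> {a<..<b} - {e1}" "e2 \<noteq> e"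
    using islimptE[OF l, of "{a<..<b} - {e1}"] e e1 o by auto
  have "\<exists>p q r. p \<in> R \<inter> {a<..<b} \<and> q \<in> R \<inter> {a<..<b} \<and> r \<in> R \<inter> {a<..<b} \<and> p < q \<and> q < r"
    by (rule three_sorted[of e e1 e2]) (use e e1 e2 in auto)
  then obtain p q r where "p \<in> R \<inter> {a<..<b}" "q \<in> R \<inter> {a<..<b}" "r \<in> R \<inter> {a<..<b}" "p < q" "q < r"
    by blast
  then show ?thesis by (intro exI[of _ q]) auto
qed

lemma mid_prop:
  fixes R :: "real set" and a b :: real
  assumes perf: "\<forall>x\<in>R. x islimpt R" and ab: "R \<inter> {a<..<b} \<noteq> {}"
  shows "mid R a b \<in> R \<and> a < mid R a b \<and> mid R a b < b \<and> R \<inter> {a<..<mid R a b} \<noteq> {}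
     \<and> R \<inter> {mid R a b<..<b} \<noteq> {}"
  unfolding mid_def by (rule someI_ex[OF mid_ex[OF assms]])

fun P :: "real set \<Rightarrow> nat \<Rightarrow> nat \<Rightarrow> real" where
  "P R 0 k = (if k = 0 then Inf R else Sup R)"
| "P R (Suc m) k = (if even k then P R m (k div 2) else mid R (P R m (k div 2)) (P R m (k div 2 + 1)))"

locale perfR =
  fixes R :: "real set"
  assumes cl: "closed R" and bd: "bounded R" and ne: "R \<noteq> {}" and perf: "\<forall>x\<in>R. x islimpt R"
begin

lemma bdd: "bdd_above R" "bdd_below R"
  using bd bounded_imp_bdd_above bounded_imp_bdd_below by auto

lemma InfR: "Inf R \<in> R" using closed_contains_Inf[OF ne bdd(2) cl] .
lemma SupR: "Sup R \<in> R" using closed_contains_Sup[OF ne bdd(1) cl] .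
lemma Inf_le: "x \<in> R \<Longrightarrow> Inf R \<le> x" using cInf_lower bdd by auto
lemma Sup_ge: "x \<in> R \<Longrightarrow> x \<le> Sup R" using cSup_upper bdd by auto

lemma base: "Inf R < Sup R \<and> R \<inter> {Inf R<..<Sup R} \<noteq> {}"
proof -
  have l: "Inf R islimpt R" using perf InfR by auto
  then obtain y where y: "y \<in> R" "y \<noteq> Inf R"
    unfolding islimpt_def by (metis UNIV_I open_UNIV)
  then have lt: "Inf R < Sup R" using Inf_le Sup_ge by force
  have "Inf R \<in> {Inf R - 1<..<Sup R}" using lt by auto
  then obtain y' where "y' \<in> R" "y' \<in> {Inf R - 1<..<Sup R}" "y' \<noteq> Inf R"
    using l unfolding islimpt_def by (metis open_greaterThanLessThan)
  then have "y' \<in> R \<inter> {Inf R<..<Sup R}" using Inf_le[of y'] by auto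
  then show ?thesis using lt by blast
qed

lemma Pinv: "(\<forall>k \<le> 2^m. P R m k \<in> R) \<and>
   (\<forall>k < 2^m. P R m k < P R m (k+1) \<and> R \<inter> {P R m k<..<P R m (k+1)} \<noteq> {})"
proof (induction m)
  case 0
  then show ?case using base InfR SupR by auto
next
  case (Suc m)
  have A: "\<forall>k \<le> 2^Suc m. P R (Suc m) k \<in> R"
  proof (intro allI impI)
    fix k :: nat assume k: "k \<le> 2^Suc m"
    show "P R (Suc m) k \<in> R"
    proof (cases "even k")
      case True
      then show ?thesis using Suc k by auto
    next
      case False
      then have "k div 2 < 2^m" using k by (auto elim!: oddE)
      then show ?thesis using Suc mid_prop[OF perf] False by auto
    qed
  qed
  have B: "\<forall>k < 2^Suc m. P R (Suc m) k < P R (Suc m) (k+1) \<and>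
      R \<inter> {P R (Suc m) k<..<P R (Suc m) (k+1)} \<noteq> {}"
  proof (intro allI impI)
    fix k :: nat assume k: "k < 2^Suc m"
    show "P R (Suc m) k < P R (Suc m) (k+1) \<and> R \<inter> {P R (Suc m) k<..<P R (Suc m) (k+1)} \<noteq> {}"
    proof (cases "even k")
      case True
      then obtain j where j: "k = 2*j" by auto
      then have "j < 2^m" using k by auto
      have e1: "P R (Suc m) k = P R m j" using j by simp
      have e2: "P R (Suc m) (k+1) = mid R (P R m j) (P R m (j+1))" using j by simp
      show ?thesis unfolding e1 e2 using mid_prop[OF perf] Suc \<open>j < 2^m\<close> by auto
    next
      case False
      then obtain j where j: "k = 2*j+1" by (auto elim!: oddE)
      then have "j < 2^m" using k by auto
      have e1: "P R (Suc m) k = mid R (P R m j) (P R m (j+1))" using j by simp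
      have e2: "P R (Suc m) (k+1) = P R m (j+1)" using j by simp
      show ?thesis unfolding e1 e2 using mid_prop[OF perf] Suc \<open>j < 2^m\<close> by auto
    qed
  qed
  show ?case using A B by blast
qed

lemma P_in: "k \<le> 2^m \<Longrightarrow> P R m k \<in> R" using Pinv by blast

lemma P_step: "k < 2^m \<Longrightarrow> P R m k < P R m (k+1)" using Pinv by blast

lemma P_mono_level: "k < k' \<Longrightarrow> k' \<le> 2^m \<Longrightarrow> P R m k < P R m k'"
proof (induction k' rule: less_induct)
  case (less k')
  then obtain j where j: "k' = Suc j" by (cases k') auto
  show ?case
  proof (cases "k = j")
    case True
    then show ?thesis using P_step[of j m] j less by auto
  next
    case False
    then have "P R m k < P R m j" using less j by auto
    also have "\<dots> < P R m k'" using P_step[of j m] j less by auto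
    finally show ?thesis .
  qed
qed

lemma P_lift: "P R (m+j) (k*2^j) = P R m k"
proof (induction j)
  case 0
  then show ?case by simp
next
  case (Suc j)
  have ev: "even (k * 2 ^ Suc j)" by simp
  have dv: "k * 2 ^ Suc j div 2 = k * 2^j" by simp
  have "P R (m + Suc j) (k * 2 ^ Suc j) = P R (Suc (m + j)) (k * 2 ^ Suc j)" by simp
  also have "\<dots> = P R (m+j) (k * 2 ^ Suc j div 2)" using ev by (simp only: P.simps if_True)
  also have "\<dots> = P R m k" using dv Suc by simp
  finally show ?case .
qed

lemma P_mono:
  assumes "k \<le> 2^m" "k' \<le> 2^m'" "real k / 2^m < real k' / 2^m'"
  shows "P R m k < P R m' k'"
proof -
  have "real k * 2^m' < real k' * 2^m" using assms(3)
    by (simp add: field_simps)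
  then have "real (k * 2^m') < real (k' * 2^m)" by simp
  then have lt: "k * 2^m' < k' * 2^m" by (simp only: of_nat_less_iff)
  have le: "k' * 2^m \<le> 2^(m+m')" using assms(2) by (simp add: power_add)
  have e1: "P R m k = P R (m+m') (k*2^m')" by (rule P_lift[symmetric])
  have e2: "P R m' k' = P R (m+m') (k'*2^m)" using P_lift[of m' m k'] by (simp add: add.commute)
  show ?thesis unfolding e1 e2 by (rule P_mono_level[OF lt le])
qed

end


lemma dyadic_between:
  fixes x y :: real
  assumes "0 \<le> x" "x < y" "y \<le> 1"
  shows "\<exists>m k. k \<le> 2^m \<and> x < real k / 2^m \<and> real k / 2^m < y"
proof -
  obtain m where m: "1 / (y - x) < 2^m" using real_arch_pow[of 2 "1/(y-x)"] by auto
  have pos: "(0::real) < 2^m" by simp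
  have m': "1 / 2^m < y - x" using m assms(2)
    by (simp add: field_simps)
  define k where "k = nat (floor (x * 2^m)) + 1"
  have fl: "real (nat (floor (x * 2^m))) = of_int (floor (x * 2^m))"
    using assms(1) by simp
  have k1: "x * 2^m < real k" unfolding k_def using fl
    by (metis floor_less_iff less_add_one of_int_1 of_int_add of_nat_1 of_nat_add)
  have k2: "real k \<le> x * 2^m + 1" unfolding k_def using fl by linarith
  have a: "x < real k / 2^m" using k1 pos by (simp add: field_simps)
  have "real k / 2^m \<le> x + 1/2^m" using k2 pos by (simp add: field_simps)
  then have b: "real k / 2^m < y" using m' by linarith
  then have "real k / 2^m < 1" using assms(3) by linarith
  then have "real k < 2^m" using pos by (simp add: pos_divide_less_eq)
  then have "k \<le> 2^m"
    by (metis less_imp_le of_nat_le_iff of_nat_numeral of_nat_power order_less_imp_le)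
  then show ?thesis using a b by blast
qed

context perfR begin

definition "Sx x = {P R m k | m k. k \<le> 2^m \<and> real k / 2^m < x}"
definition "Ux x = {P R m k | m k. k \<le> 2^m \<and> x < real k / 2^m}"
definition "g x = (if x = 0 then Inf R else Sup (Sx x))"
definition "h x = (if x = 1 then Sup R else Inf (Ux x))"

lemma Sx_sub: "Sx x \<subseteq> R" unfolding Sx_def using P_in by auto
lemma Ux_sub: "Ux x \<subseteq> R" unfolding Ux_def using P_in by auto
lemma Sx_bdd: "bdd_above (Sx x)" by (rule bdd_above_mono[OF bdd(1) Sx_sub])
lemma Ux_bdd: "bdd_below (Ux x)" by (rule bdd_below_mono[OF bdd(2) Ux_sub])

lemma Sx_mem: "k \<le> 2^m \<Longrightarrow> real k / 2^m < x \<Longrightarrow> P R m k \<in> Sx x"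
  unfolding Sx_def by blast
lemma Ux_mem: "k \<le> 2^m \<Longrightarrow> x < real k / 2^m \<Longrightarrow> P R m k \<in> Ux x"
  unfolding Ux_def by blast

lemma Sx_ne: "0 < x \<Longrightarrow> Sx x \<noteq> {}" using Sx_mem[of 0 0 x] by auto
lemma Ux_ne: "x < 1 \<Longrightarrow> Ux x \<noteq> {}" using Ux_mem[of 1 0 x] by auto

lemma gR: "0 \<le> x \<Longrightarrow> g x \<in> R"
proof (cases "x = 0")
  case True then show ?thesis unfolding g_def using InfR by simp
next
  case False
  assume "0 \<le> x"
  then have "0 < x" using False by simp
  have "Sup (Sx x) \<in> closure (Sx x)" by (rule closure_contains_Sup[OF Sx_ne[OF \<open>0<x\<close>] Sx_bdd])
  also have "\<dots> \<subseteq> R" using Sx_sub cl closure_minimal by blast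
  finally show ?thesis unfolding g_def using False by simp
qed

lemma hR: "x \<le> 1 \<Longrightarrow> h x \<in> R"
proof (cases "x = 1")
  case True then show ?thesis unfolding h_def using SupR by simp
next
  case False
  assume "x \<le> 1"
  then have "x < 1" using False by simp
  have "Inf (Ux x) \<in> closure (Ux x)" by (rule closure_contains_Inf[OF Ux_ne[OF \<open>x<1\<close>] Ux_bdd])
  also have "\<dots> \<subseteq> R" using Ux_sub cl closure_minimal by blast
  finally show ?thesis unfolding h_def using False by simp
qed

lemma g_ge: "0 < x \<Longrightarrow> k \<le> 2^m \<Longrightarrow> real k / 2^m < x \<Longrightarrow> P R m k \<le> g x"
  unfolding g_def using cSup_upper[OF Sx_mem Sx_bdd] by auto

lemma h_le: "x < 1 \<Longrightarrow> k \<le> 2^m \<Longrightarrow> x < real k / 2^m \<Longrightarrow> h x \<le> P R m k"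
  unfolding h_def using cInf_lower[OF Ux_mem Ux_bdd] by auto

lemma hg: assumes "0 \<le> x" "x < y" "y \<le> 1" shows "h x < g y"
proof -
  obtain m k where mk: "k \<le> 2^m" "x < real k / 2^m" "real k / 2^m < y"
    using dyadic_between assms by blast
  have "0 \<le> real k / 2^m" by simp
  then obtain m' k' where mk': "k' \<le> 2^m'" "real k / 2^m < real k' / 2^m'" "real k' / 2^m' < y"
    using dyadic_between[of "real k / 2^m" y] mk assms by blast
  have "h x \<le> P R m k" using h_le mk assms by simp
  also have "\<dots> < P R m' k'" using P_mono mk mk' by blast
  also have "\<dots> \<le> g y" using g_ge mk' assms by simp
  finally show ?thesis .
qed

lemma gh: assumes "0 \<le> x" "x \<le> 1" shows "g x \<le> h x"
proof (cases "x = 0 \<or> x = 1")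
  case True
  then show ?thesis
  proof
    assume "x = 0" then show ?thesis unfolding g_def using Inf_le hR by simp
  next
    assume "x = 1" then show ?thesis unfolding h_def using Sup_ge gR by simp
  qed
next
  case False
  then have x: "0 < x" "x < 1" using assms by auto
  have "Sup (Sx x) \<le> Inf (Ux x)"
  proof (rule cSup_least[OF Sx_ne[OF x(1)]])
    fix s assume "s \<in> Sx x"
    then obtain m k where s: "s = P R m k" "k \<le> 2^m" "real k / 2^m < x" unfolding Sx_def by blast
    show "s \<le> Inf (Ux x)"
    proof (rule cInf_greatest[OF Ux_ne[OF x(2)]])
      fix u assume "u \<in> Ux x"
      then obtain m' k' where u: "u = P R m' k'" "k' \<le> 2^m'" "x < real k' / 2^m'" unfolding Ux_def by blast
      show "s \<le> u" using P_mono[of k m k' m'] s u by force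
    qed
  qed
  then show ?thesis unfolding g_def h_def using False by simp
qed

lemma g0: "g 0 = Inf R" unfolding g_def by simp
lemma h1: "h 1 = Sup R" unfolding h_def by simp

lemma gl: assumes "0 \<le> x" "x \<le> 1" "z \<in> R" "z < g x"
  shows "\<exists>y. 0 \<le> y \<and> y < x \<and> z < g y"
proof -
  have "x \<noteq> 0" using assms Inf_le g0 by fastforce
  then have x: "0 < x" using assms by simp
  have "z < Sup (Sx x)" using assms \<open>x \<noteq> 0\<close> unfolding g_def by simp
  then obtain s where "s \<in> Sx x" "z < s" using less_cSup_iff[OF Sx_ne[OF x] Sx_bdd] by blast
  then obtain m k where s: "s = P R m k" "k \<le> 2^m" "real k / 2^m < x" unfolding Sx_def by blast
  define y where "y = (real k / 2^m + x) / 2"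
  have d0: "0 \<le> real k / 2^m" by simp
  have y: "0 < y" "y < x" "real k / 2^m < y" unfolding y_def using s d0 x by (auto simp: field_simps)
  have "s \<le> g y" using g_ge[OF y(1) s(2) y(3)] s by simp
  then show ?thesis using y \<open>z < s\<close> by (intro exI[of _ y]) auto
qed

lemma hr: assumes "0 \<le> x" "x \<le> 1" "z \<in> R" "h x < z"
  shows "\<exists>y. x < y \<and> y \<le> 1 \<and> h y < z"
proof -
  have "x \<noteq> 1" using assms Sup_ge h1 by fastforce
  then have x: "x < 1" using assms by simp
  have "Inf (Ux x) < z" using assms \<open>x \<noteq> 1\<close> unfolding h_def by simp
  then obtain s where "s \<in> Ux x" "s < z" using cInf_less_iff[OF Ux_ne[OF x] Ux_bdd] by blast
  then obtain m k where s: "s = P R m k" "k \<le> 2^m" "x < real k / 2^m" unfolding Ux_def by blast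
  define y where "y = (real k / 2^m + x) / 2"
  have d1: "real k / 2^m \<le> 1" using s(2) by (simp add: divide_le_eq)
  have aux: "\<And>d::real. d \<le> 1 \<Longrightarrow> (d + x) / 2 < 1" using x by (simp add: field_simps)
  have y1: "y < 1" unfolding y_def using d1 by (rule aux)
  have y: "y < 1" "x < y" "y < real k / 2^m" using y1 unfolding y_def using s x by (auto simp: field_simps)
  have "h y \<le> s" using h_le[OF y(1) s(2) y(3)] s by simp
  then show ?thesis using y \<open>s < z\<close> by (intro exI[of _ y]) auto
qed

end


definition LN :: "nat \<Rightarrow> real set \<Rightarrow> real \<Rightarrow> real \<Rightarrow> (real \<times> nat) set" where
  "LN n R x z = {(x, 0)} \<union> {(y, i) | y i. y \<in> R \<and> z < y \<and> y < x \<and> i < n}"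
definition RN :: "nat \<Rightarrow> real set \<Rightarrow> real \<Rightarrow> real \<Rightarrow> (real \<times> nat) set" where
  "RN n R x z = {(x, 1)} \<union> {(y, i) | y i. y \<in> R \<and> x < y \<and> y < z \<and> i < n}"

lemma LN_mem: "(a, b) \<in> LN n R x z \<longleftrightarrow> (a = x \<and> b = 0) \<or> (a \<in> R \<and> z < a \<and> a < x \<and> b < n)"
  unfolding LN_def by auto
lemma RN_mem: "(a, b) \<in> RN n R x z \<longleftrightarrow> (a = x \<and> b = 1) \<or> (a \<in> R \<and> x < a \<and> a < z \<and> b < n)"
  unfolding RN_def by auto

lemma split_basis_cases:
  "U \<in> split_basis n R \<longleftrightarrow>
     (\<exists>x i. U = {(x, i)} \<and> x \<in> R \<and> 2 \<le> i \<and> i < n)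
   \<or> (U = {(Inf R, 0)} \<and> Inf R \<in> R)
   \<or> (\<exists>x z. U = LN n R x z \<and> x \<in> R \<and> z \<in> R \<and> z < x)
   \<or> (U = {(Sup R, 1)} \<and> Sup R \<in> R)
   \<or> (\<exists>x z. U = RN n R x z \<and> x \<in> R \<and> z \<in> R \<and> x < z)"
  unfolding split_basis_def LN_def RN_def by blast

lemma open_nbhd:
  assumes "\<And>p. p \<in> V \<Longrightarrow> \<exists>b\<in>B. p \<in> b \<and> b \<subseteq> V"
  shows "openin (topology_generated_by B) V"
proof -
  have "V = \<Union>{b \<in> B. b \<subseteq> V}" using assms by blast
  moreover have "generate_topology_on B (\<Union>{b \<in> B. b \<subseteq> V})"
    by (rule generate_topology_on.UN) (auto intro: generate_topology_on.Basis)
  ultimately show ?thesis by (simp add: openin_topology_generated_by_iff)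
qed

lemma topspace_split:
  fixes R :: "real set"
  assumes "closed R" "bounded R" "R \<noteq> {}" "2 \<le> n"
  shows "topspace (split_interval n R) = R \<times> {..<n}"
proof -
  have IR: "Inf R \<in> R" using closed_contains_Inf[OF assms(3) bounded_imp_bdd_below[OF assms(2)] assms(1)] .
  have SR: "Sup R \<in> R" using closed_contains_Sup[OF assms(3) bounded_imp_bdd_above[OF assms(2)] assms(1)] .
  have Il: "x \<in> R \<Longrightarrow> Inf R \<le> x" for x using cInf_lower[OF _ bounded_imp_bdd_below[OF assms(2)]] by blast
  have Su: "x \<in> R \<Longrightarrow> x \<le> Sup R" for x using cSup_upper[OF _ bounded_imp_bdd_above[OF assms(2)]] by blast
  have "\<Union>(split_basis n R) \<subseteq> R \<times> {..<n}"
  proof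
    fix p assume "p \<in> \<Union>(split_basis n R)"
    then obtain U where "U \<in> split_basis n R" "p \<in> U" by blast
    then show "p \<in> R \<times> {..<n}" unfolding split_basis_cases using assms(4) IR SR
      by (cases p) (auto simp: LN_mem RN_mem)
  qed
  moreover have "R \<times> {..<n} \<subseteq> \<Union>(split_basis n R)"
  proof
    fix p assume p: "p \<in> R \<times> {..<n}"
    obtain x i where xi: "p = (x, i)" by (cases p)
    have x: "x \<in> R" "i < n" using p xi by auto
    show "p \<in> \<Union>(split_basis n R)"
    proof -
      consider "2 \<le> i" | "i = 0" | "i = 1" by linarith
      then show ?thesis
      proof cases
        case 1
        then have "{(x,i)} \<in> split_basis n R" unfolding split_basis_cases using x by blast
        then show ?thesis using xi by blast
      next
        case 2
        show ?thesis
        proof (cases "x = Inf R")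
          case True
          then have "{(x,i)} \<in> split_basis n R" unfolding split_basis_cases using IR 2 by blast
          then show ?thesis using xi by blast
        next
          case False
          then have "Inf R < x" using Il[OF x(1)] by simp
          then have "LN n R x (Inf R) \<in> split_basis n R" unfolding split_basis_cases using IR x by blast
          moreover have "(x, i) \<in> LN n R x (Inf R)" using 2 by (simp add: LN_mem)
          ultimately show ?thesis using xi by blast
        qed
      next
        case 3
        show ?thesis
        proof (cases "x = Sup R")
          case True
          then have "{(x,i)} \<in> split_basis n R" unfolding split_basis_cases using SR 3 by blast
          then show ?thesis using xi by blast
        next
          case False
          then have "x < Sup R" using Su[OF x(1)] by simp
          then have "RN n R x (Sup R) \<in> split_basis n R" unfolding split_basis_cases using SR x by blast
          moreover have "(x, i) \<in> RN n R x (Sup R)" using 3 by (simp add: RN_mem)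
          ultimately show ?thesis using xi by blast
        qed
      qed
    qed
  qed
  ultimately show ?thesis unfolding split_interval_def by simp
qed



locale emb =
  fixes n :: nat and R :: "real set" and g h :: "real \<Rightarrow> real"
  assumes n2: "2 \<le> n" and cl: "closed R" and bd: "bounded R" and ne: "R \<noteq> {}"
  and gR: "\<And>x. x \<in> {0..1} \<Longrightarrow> g x \<in> R"
  and hR: "\<And>x. x \<in> {0..1} \<Longrightarrow> h x \<in> R"
  and gh: "\<And>x. x \<in> {0..1} \<Longrightarrow> g x \<le> h x"
  and hg: "\<And>x y. x \<in> {0..1} \<Longrightarrow> y \<in> {0..1} \<Longrightarrow> x < y \<Longrightarrow> h x < g y"
  and g0: "g 0 = Inf R" and h1: "h 1 = Sup R"
  and gl: "\<And>x z. x \<in> {0..1} \<Longrightarrow> z \<in> R \<Longrightarrow> z < g x \<Longrightarrow> \<exists>y\<in>{0..1}. y < x \<and> z < g y"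
  and hr: "\<And>x z. x \<in> {0..1} \<Longrightarrow> z \<in> R \<Longrightarrow> h x < z \<Longrightarrow> \<exists>y\<in>{0..1}. x < y \<and> h y < z"
begin

lemma Il: "x \<in> R \<Longrightarrow> Inf R \<le> x" using cInf_lower[OF _ bounded_imp_bdd_below[OF bd]] by blast
lemma Su: "x \<in> R \<Longrightarrow> x \<le> Sup R" using cSup_upper[OF _ bounded_imp_bdd_above[OF bd]] by blast
lemma IR: "Inf R \<in> R" using closed_contains_Inf[OF ne bounded_imp_bdd_below[OF bd] cl] .
lemma SR: "Sup R \<in> R" using closed_contains_Sup[OF ne bounded_imp_bdd_above[OF bd] cl] .

lemma g_mono: "x \<in> {0..1} \<Longrightarrow> y \<in> {0..1} \<Longrightarrow> x < y \<Longrightarrow> g x < g y"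
  using gh[of x] hg[of x y] by linarith
lemma h_mono: "x \<in> {0..1} \<Longrightarrow> y \<in> {0..1} \<Longrightarrow> x < y \<Longrightarrow> h x < h y"
  using gh[of y] hg[of x y] by linarith
lemma gg: "x \<in> {0..1} \<Longrightarrow> y \<in> {0..1} \<Longrightarrow> g x < g y \<longleftrightarrow> x < y"
  using g_mono[of x y] g_mono[of y x] by (cases x y rule: linorder_cases) auto
lemma hh: "x \<in> {0..1} \<Longrightarrow> y \<in> {0..1} \<Longrightarrow> h x < h y \<longleftrightarrow> x < y"
  using h_mono[of x y] h_mono[of y x] by (cases x y rule: linorder_cases) auto
lemma hgl: "x \<in> {0..1} \<Longrightarrow> y \<in> {0..1} \<Longrightarrow> h x < g y \<longleftrightarrow> x < y"
  using hg[of x y] hg[of y x] gh[of x] gh[of y] by (cases x y rule: linorder_cases) auto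
lemma ge: "x \<in> {0..1} \<Longrightarrow> y \<in> {0..1} \<Longrightarrow> g x = g y \<longleftrightarrow> x = y"
  using g_mono[of x y] g_mono[of y x] by (cases x y rule: linorder_cases) auto
lemma he: "x \<in> {0..1} \<Longrightarrow> y \<in> {0..1} \<Longrightarrow> h x = h y \<longleftrightarrow> x = y"
  using h_mono[of x y] h_mono[of y x] by (cases x y rule: linorder_cases) auto
lemma gI: "x \<in> {0..1} \<Longrightarrow> g x = Inf R \<longleftrightarrow> x = 0"
proof
  assume x: "x \<in> {0..1}" "g x = Inf R"
  show "x = 0"
  proof (rule ccontr)
    assume "x \<noteq> 0"
    then have "0 < x" using x by auto
    then have "g 0 < g x" using gg[of 0 x] x(1) by auto
    then show False using x g0 by simp
  qed
qed (simp add: g0)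
lemma hS: "x \<in> {0..1} \<Longrightarrow> h x = Sup R \<longleftrightarrow> x = 1"
proof
  assume x: "x \<in> {0..1}" "h x = Sup R"
  show "x = 1"
  proof (rule ccontr)
    assume "x \<noteq> 1"
    then have "x < 1" using x by auto
    then have "h x < h 1" using hh[of x 1] x(1) by auto
    then show False using x h1 by simp
  qed
qed (simp add: h1)

lemma gpos: assumes "x \<in> {0..1}" "0 < x" shows "Inf R < g x"
proof -
  have "g x \<noteq> Inf R" using gI[OF assms(1)] assms(2) by simp
  moreover have "Inf R \<le> g x" using Il[OF gR[OF assms(1)]] .
  ultimately show ?thesis by simp
qed
lemma hlt: assumes "x \<in> {0..1}" "x < 1" shows "h x < Sup R"
proof -
  have "h x \<noteq> Sup R" using hS[OF assms(1)] assms(2) by simp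
  moreover have "h x \<le> Sup R" using Su[OF hR[OF assms(1)]] .
  ultimately show ?thesis by simp
qed

definition F :: "real \<times> nat \<Rightarrow> real \<times> nat" where
  "F p = (if snd p = 1 then h (fst p) else g (fst p), snd p)"
definition G :: "real \<times> nat \<Rightarrow> real \<times> nat" where
  "G q = (if snd q = 1 then (THE x. x \<in> {0..1} \<and> h x = fst q) else (THE x. x \<in> {0..1} \<and> g x = fst q), snd q)"

lemma GF: assumes x: "x \<in> {0..1}" shows "G (F (x, i)) = (x, i)"
proof (cases "i = 1")
  case True
  have "(THE y. y \<in> {0..1} \<and> h y = h x) = x"
    by (rule the_equality) (use x he in auto)
  then show ?thesis unfolding F_def G_def using True by simp
next
  case False
  have "(THE y. y \<in> {0..1} \<and> g y = g x) = x"
    by (rule the_equality) (use x ge in auto)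
  then show ?thesis unfolding F_def G_def using False by simp
qed

lemma I_props: "closed {0..1::real}" "bounded {0..1::real}" "{0..1::real} \<noteq> {}"
  "Inf {0..1::real} = 0" "Sup {0..1::real} = 1"
  by auto

lemma topI: "topspace (split_interval n {0..1}) = {0..1} \<times> {..<n}"
  using topspace_split[OF I_props(1-3) n2] .
lemma topR: "topspace (split_interval n R) = R \<times> {..<n}"
  using topspace_split[OF cl bd ne n2] .


lemma Fv: "u \<in> {0..1} \<Longrightarrow> fst (F (u, k)) \<in> R \<and> g u \<le> fst (F (u, k)) \<and> fst (F (u, k)) \<le> h u"
  unfolding F_def using gR hR gh by auto
lemma F_pair: "F (u, k) = (fst (F (u, k)), k)" unfolding F_def by simp
lemma F0: "F (x, 0) = (g x, 0)" unfolding F_def by simp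
lemma F1: "F (x, 1) = (h x, 1)" unfolding F_def by simp

lemma LN_F: "u \<in> {0..1} \<Longrightarrow> z < fst (F (u,k)) \<Longrightarrow> fst (F (u,k)) < c \<Longrightarrow> k < n \<Longrightarrow> F (u,k) \<in> LN n R c z"
  using Fv[of u k] F_pair[of u k] LN_mem[of "fst (F (u,k))" k n R c z] by auto
lemma RN_F: "u \<in> {0..1} \<Longrightarrow> c < fst (F (u,k)) \<Longrightarrow> fst (F (u,k)) < z \<Longrightarrow> k < n \<Longrightarrow> F (u,k) \<in> RN n R c z"
  using Fv[of u k] F_pair[of u k] RN_mem[of "fst (F (u,k))" k n R c z] by auto

abbreviation "BI \<equiv> split_basis n {0..1}"

lemma bI_single: "x \<in> {0..1} \<Longrightarrow> 2 \<le> i \<Longrightarrow> i < n \<Longrightarrow> {(x, i)} \<in> BI"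
  unfolding split_basis_cases by blast
lemma bI0: "{(0, 0)} \<in> BI" unfolding split_basis_cases using I_props by auto
lemma bI1: "{(1, 1)} \<in> BI" unfolding split_basis_cases using I_props by auto
lemma bIL: "x \<in> {0..1} \<Longrightarrow> w \<in> {0..1} \<Longrightarrow> w < x \<Longrightarrow> LN n {0..1} x w \<in> BI"
  unfolding split_basis_cases by blast
lemma bIR: "x \<in> {0..1} \<Longrightarrow> w \<in> {0..1} \<Longrightarrow> x < w \<Longrightarrow> RN n {0..1} x w \<in> BI"
  unfolding split_basis_cases by blast

lemma nbhd_F:
  assumes U: "U \<in> split_basis n R" and x: "x \<in> {0..1}" and i: "i < n" and FU: "F (x, i) \<in> U"
  shows "\<exists>b\<in>BI. (x, i) \<in> b \<and> (\<forall>q\<in>b. q \<in> {0..1} \<times> {..<n} \<and> F q \<in> U)"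
proof -
  have n0: "0 < n" "1 < n" using n2 by auto
  consider "2 \<le> i" | "i = 0" "x = 0" | "i = 1" "x = 1" | "i = 0" "0 < x" | "i = 1" "x < 1"
    using x by fastforce
  then show ?thesis
  proof cases
    case 1
    then show ?thesis using bI_single[OF x 1 i] x i FU by (intro bexI[of _ "{(x,i)}"]) auto
  next
    case 2
    then show ?thesis using bI0 FU n0 by (intro bexI[of _ "{(0,0)}"]) auto
  next
    case 3
    then show ?thesis using bI1 FU n0 by (intro bexI[of _ "{(1,1)}"]) auto
  next
    case 4
    have gxR: "g x \<in> R" using gR x .
    from U show ?thesis unfolding split_basis_cases
    proof (elim disjE exE conjE)
      fix c j assume "U = {(c, j)}" "2 \<le> j"
      then show ?thesis using FU 4 F0 by auto
    next
      assume "U = {(Inf R, 0)}"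
      then show ?thesis using FU 4 F0 gpos[OF x] by auto
    next
      assume "U = {(Sup R, 1)}"
      then show ?thesis using FU 4 F0 by auto
    next
      fix c z assume Ue: "U = LN n R c z" and cz: "c \<in> R" "z \<in> R" "z < c"
      have gx: "z < g x" "g x \<le> c" using FU 4 F0[of x] cz unfolding Ue by (auto simp: LN_mem)
      obtain y where y: "y \<in> {0..1}" "y < x" "z < g y" using gl[OF x cz(2) gx(1)] by blast
      show ?thesis
      proof (intro bexI[OF _ bIL[OF x y(1) y(2)]] conjI ballI)
        show "(x, i) \<in> LN n {0..1} x y" using 4 by (simp add: LN_mem)
        fix q assume q: "q \<in> LN n {0..1} x y"
        obtain u k where qe: "q = (u, k)" by (cases q)
        show "q \<in> {0..1} \<times> {..<n}" using q qe x n0 by (auto simp: LN_mem)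
        show "F q \<in> U"
        proof (cases "q = (x, 0)")
          case True then show ?thesis using FU 4 by simp
        next
          case False
          then have u: "u \<in> {0..1}" "y < u" "u < x" "k < n" using q qe by (auto simp: LN_mem)
          have "g y < g u" "h u < g x" using g_mono[OF y(1) u(1) u(2)] hg[OF u(1) x u(3)] by auto
          then show ?thesis unfolding qe Ue using Fv[OF u(1), of k] y gx u by (intro LN_F) auto
        qed
      qed
    next
      fix c z assume Ue: "U = RN n R c z" and cz: "c \<in> R" "z \<in> R" "c < z"
      have gx: "c < g x" "g x < z" using FU 4 F0[of x] cz unfolding Ue by (auto simp: RN_mem)
      obtain y where y: "y \<in> {0..1}" "y < x" "c < g y" using gl[OF x cz(1) gx(1)] by blast
      show ?thesis
      proof (intro bexI[OF _ bIL[OF x y(1) y(2)]] conjI ballI)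
        show "(x, i) \<in> LN n {0..1} x y" using 4 by (simp add: LN_mem)
        fix q assume q: "q \<in> LN n {0..1} x y"
        obtain u k where qe: "q = (u, k)" by (cases q)
        show "q \<in> {0..1} \<times> {..<n}" using q qe x n0 by (auto simp: LN_mem)
        show "F q \<in> U"
        proof (cases "q = (x, 0)")
          case True then show ?thesis using FU 4 by simp
        next
          case False
          then have u: "u \<in> {0..1}" "y < u" "u < x" "k < n" using q qe by (auto simp: LN_mem)
          have "g y < g u" "h u < g x" using g_mono[OF y(1) u(1) u(2)] hg[OF u(1) x u(3)] by auto
          then show ?thesis unfolding qe Ue using Fv[OF u(1), of k] y gx u by (intro RN_F) auto
        qed
      qed
    qed
  next
    case 5
    have hxR: "h x \<in> R" using hR x .
    from U show ?thesis unfolding split_basis_cases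
    proof (elim disjE exE conjE)
      fix c j assume "U = {(c, j)}" "2 \<le> j"
      then show ?thesis using FU 5 F1 by auto
    next
      assume "U = {(Inf R, 0)}"
      then show ?thesis using FU 5 F1 by auto
    next
      assume "U = {(Sup R, 1)}"
      then show ?thesis using FU 5 F1 hlt[OF x] by auto
    next
      fix c z assume Ue: "U = LN n R c z" and cz: "c \<in> R" "z \<in> R" "z < c"
      have hx: "z < h x" "h x < c" using FU 5 F1[of x] cz unfolding Ue by (auto simp: LN_mem)
      obtain y where y: "y \<in> {0..1}" "x < y" "h y < c" using hr[OF x cz(1) hx(2)] by blast
      show ?thesis
      proof (intro bexI[OF _ bIR[OF x y(1) y(2)]] conjI ballI)
        show "(x, i) \<in> RN n {0..1} x y" using 5 by (simp add: RN_mem)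
        fix q assume q: "q \<in> RN n {0..1} x y"
        obtain u k where qe: "q = (u, k)" by (cases q)
        show "q \<in> {0..1} \<times> {..<n}" using q qe x n0 by (auto simp: RN_mem)
        show "F q \<in> U"
        proof (cases "q = (x, 1)")
          case True then show ?thesis using FU 5 by simp
        next
          case False
          then have u: "u \<in> {0..1}" "x < u" "u < y" "k < n" using q qe by (auto simp: RN_mem)
          have "h x < g u" "h u < h y" using hg[OF x u(1) u(2)] h_mono[OF u(1) y(1) u(3)] by auto
          then show ?thesis unfolding qe Ue using Fv[OF u(1), of k] y hx u by (intro LN_F) auto
        qed
      qed
    next
      fix c z assume Ue: "U = RN n R c z" and cz: "c \<in> R" "z \<in> R" "c < z"
      have hx: "c \<le> h x" "h x < z" using FU 5 F1[of x] cz unfolding Ue by (auto simp: RN_mem)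
      obtain y where y: "y \<in> {0..1}" "x < y" "h y < z" using hr[OF x cz(2) hx(2)] by blast
      show ?thesis
      proof (intro bexI[OF _ bIR[OF x y(1) y(2)]] conjI ballI)
        show "(x, i) \<in> RN n {0..1} x y" using 5 by (simp add: RN_mem)
        fix q assume q: "q \<in> RN n {0..1} x y"
        obtain u k where qe: "q = (u, k)" by (cases q)
        show "q \<in> {0..1} \<times> {..<n}" using q qe x n0 by (auto simp: RN_mem)
        show "F q \<in> U"
        proof (cases "q = (x, 1)")
          case True then show ?thesis using FU 5 by simp
        next
          case False
          then have u: "u \<in> {0..1}" "x < u" "u < y" "k < n" using q qe by (auto simp: RN_mem)
          have "h x < g u" "h u < h y" using hg[OF x u(1) u(2)] h_mono[OF u(1) y(1) u(3)] by auto
          then show ?thesis unfolding qe Ue using Fv[OF u(1), of k] y hx u by (intro RN_F) auto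
        qed
      qed
    qed
  qed
qed


lemma nbhd_G:
  assumes U: "U \<in> BI"
  shows "\<exists>N\<in>split_basis n R. \<forall>p\<in>{0..1} \<times> {..<n}. p \<in> U \<longleftrightarrow> F p \<in> N"
proof -
  from U show ?thesis unfolding split_basis_cases[of U n "{0..1}"] I_props
  proof (elim disjE exE conjE)
    fix x j assume Ue: "U = {(x, j)}" "x \<in> {0..1::real}" "2 \<le> j" "j < n"
    have "{(g x, j)} \<in> split_basis n R" unfolding split_basis_cases using Ue gR by blast
    moreover have "\<forall>p\<in>{0..1} \<times> {..<n}. p \<in> U \<longleftrightarrow> F p \<in> {(g x, j)}"
      using Ue by (auto simp: F_def ge)
    ultimately show ?thesis by blast
  next
    assume Ue: "U = {(0, 0)}"
    have "{(Inf R, 0)} \<in> split_basis n R" unfolding split_basis_cases using IR by blast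
    moreover have "\<forall>p\<in>{0..1} \<times> {..<n}. p \<in> U \<longleftrightarrow> F p \<in> {(Inf R, 0)}"
      using Ue by (auto simp: F_def gI)
    ultimately show ?thesis by blast
  next
    assume Ue: "U = {(1, 1)}"
    have "{(Sup R, 1)} \<in> split_basis n R" unfolding split_basis_cases using SR by blast
    moreover have "\<forall>p\<in>{0..1} \<times> {..<n}. p \<in> U \<longleftrightarrow> F p \<in> {(Sup R, 1)}"
      using Ue by (auto simp: F_def hS)
    ultimately show ?thesis by blast
  next
    fix x w assume Ue: "U = LN n {0..1} x w" "x \<in> {0..1::real}" "w \<in> {0..1::real}" "w < x"
    have "LN n R (g x) (h w) \<in> split_basis n R" unfolding split_basis_cases
      using Ue gR hR hg by blast
    moreover have "\<forall>p\<in>{0..1} \<times> {..<n}. p \<in> U \<longleftrightarrow> F p \<in> LN n R (g x) (h w)"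
    proof
      fix p :: "real \<times> nat" assume p: "p \<in> {0..1} \<times> {..<n}"
      obtain y i where pe: "p = (y, i)" by (cases p)
      have y: "y \<in> {0..1}" "i < n" using p pe by auto
      show "p \<in> U \<longleftrightarrow> F p \<in> LN n R (g x) (h w)"
        unfolding pe Ue(1) F_def using y Ue(2,3) gR[OF y(1)] hR[OF y(1)]
        by (auto simp: LN_mem gg hh hgl ge)
    qed
    ultimately show ?thesis by blast
  next
    fix x v assume Ue: "U = RN n {0..1} x v" "x \<in> {0..1::real}" "v \<in> {0..1::real}" "x < v"
    have "RN n R (h x) (g v) \<in> split_basis n R" unfolding split_basis_cases
      using Ue gR hR hg by blast
    moreover have "\<forall>p\<in>{0..1} \<times> {..<n}. p \<in> U \<longleftrightarrow> F p \<in> RN n R (h x) (g v)"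
    proof
      fix p :: "real \<times> nat" assume p: "p \<in> {0..1} \<times> {..<n}"
      obtain y i where pe: "p = (y, i)" by (cases p)
      have y: "y \<in> {0..1}" "i < n" using p pe by auto
      show "p \<in> U \<longleftrightarrow> F p \<in> RN n R (h x) (g v)"
        unfolding pe Ue(1) F_def using y Ue(2,3) gR[OF y(1)] hR[OF y(1)]
        by (auto simp: RN_mem gg hh hgl he)
    qed
    ultimately show ?thesis by blast
  qed
qed

lemma main: "\<exists>T. T \<subseteq> topspace (split_interval n R) \<and>
           subtopology (split_interval n R) T homeomorphic_space split_interval n {0..1}"
proof -
  define T where "T = F ` ({0..1} \<times> {..<n})"
  have Tsub: "T \<subseteq> topspace (split_interval n R)"
    unfolding T_def topR using gR hR by (auto simp: F_def)
  have topT: "topspace (subtopology (split_interval n R) T) = T"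
    using Tsub by (simp add: topspace_subtopology Int_absorb1)
  have GF': "\<And>p. p \<in> {0..1} \<times> {..<n} \<Longrightarrow> G (F p) = p" using GF by auto
  have cF: "continuous_map (split_interval n {0..1}) (subtopology (split_interval n R) T) F"
    unfolding continuous_map_in_subtopology
  proof
    show "F \<in> topspace (split_interval n {0..1}) \<rightarrow> T" unfolding topI T_def by auto
    show "continuous_map (split_interval n {0..1}) (split_interval n R) F"
      unfolding split_interval_def[of n R]
    proof (rule continuous_on_generated_topo)
      fix U assume U: "U \<in> split_basis n R"
      show "openin (split_interval n {0..1}) (F -` U \<inter> topspace (split_interval n {0..1}))"
        unfolding topI unfolding split_interval_def
      proof (rule open_nbhd)
        fix p assume p: "p \<in> F -` U \<inter> {0..1} \<times> {..<n}"
        obtain x i where pe: "p = (x, i)" by (cases p)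
        have "x \<in> {0..1}" "i < n" "F (x, i) \<in> U" using p pe by auto
        from nbhd_F[OF U this] show "\<exists>b\<in>BI. p \<in> b \<and> b \<subseteq> F -` U \<inter> {0..1} \<times> {..<n}"
          using pe by blast
      qed
    next
      have "F ` topspace (split_interval n {0..1}) \<subseteq> topspace (split_interval n R)"
        using Tsub unfolding T_def topI by simp
      then show "F ` topspace (split_interval n {0..1}) \<subseteq> \<Union> (split_basis n R)"
        unfolding split_interval_def[of n R] by simp
    qed
  qed
  have cG: "continuous_map (subtopology (split_interval n R) T) (split_interval n {0..1}) G"
    unfolding split_interval_def[of n "{0..1}"]
  proof (rule continuous_on_generated_topo)
    fix U assume U: "U \<in> BI"
    obtain N where N: "N \<in> split_basis n R" "\<forall>p\<in>{0..1} \<times> {..<n}. p \<in> U \<longleftrightarrow> F p \<in> N"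
      using nbhd_G[OF U] by blast
    have "G -` U \<inter> T = N \<inter> T"
    proof
      show "G -` U \<inter> T \<subseteq> N \<inter> T" unfolding T_def using N(2) GF' by force
      show "N \<inter> T \<subseteq> G -` U \<inter> T" unfolding T_def using N(2) GF' by force
    qed
    moreover have "openin (split_interval n R) N"
      unfolding split_interval_def by (rule topology_generated_by_Basis[OF N(1)])
    ultimately show "openin (subtopology (split_interval n R) T)
        (G -` U \<inter> topspace (subtopology (split_interval n R) T))"
      unfolding topT openin_subtopology by blast
  next
    have "G ` T \<subseteq> {0..1} \<times> {..<n}" unfolding T_def using GF' by force
    then show "G ` topspace (subtopology (split_interval n R) T) \<subseteq> \<Union> BI"
      using topI unfolding split_interval_def by auto
  qed
  have "homeomorphic_maps (subtopology (split_interval n R) T) (split_interval n {0..1}) G F"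
    unfolding homeomorphic_maps_def
  proof (intro conjI ballI cG cF)
    fix p assume "p \<in> topspace (split_interval n {0..1})"
    then show "G (F p) = p" using GF' topI by simp
  next
    fix q assume "q \<in> topspace (subtopology (split_interval n R) T)"
    then show "F (G q) = q" using GF' unfolding topT T_def by force
  qed
  then show ?thesis using Tsub unfolding homeomorphic_space_def by blast
qed

end

theorem mainTheorem3:
  fixes n :: nat and R :: "real set"
  assumes "n \<ge> 2"
    and "R \<subseteq> {0..1}" and "R \<noteq> {}" and "perfect_set R"
  shows "\<exists>T. T \<subseteq> topspace (split_interval n R) \<and>
           subtopology (split_interval n R) T homeomorphic_space split_interval n {0..1}"
proof -
  have cl: "closed R" and perf: "\<forall>x\<in>R. x islimpt R" using assms(4) unfolding perfect_set_def by auto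
  have bd: "bounded R" using bounded_subset[OF bounded_closed_interval assms(2)] .
  interpret PR: perfR R using cl bd assms(3) perf by unfold_locales
  interpret E: emb n R PR.g PR.h
  proof unfold_locales
    show "2 \<le> n" using assms(1) .
    show "closed R" "bounded R" "R \<noteq> {}" using cl bd assms(3) by auto
    show "\<And>x. x \<in> {0..1} \<Longrightarrow> PR.g x \<in> R" using PR.gR by auto
    show "\<And>x. x \<in> {0..1} \<Longrightarrow> PR.h x \<in> R" using PR.hR by auto
    show "\<And>x. x \<in> {0..1} \<Longrightarrow> PR.g x \<le> PR.h x" using PR.gh by auto
    show "\<And>x y. x \<in> {0..1} \<Longrightarrow> y \<in> {0..1} \<Longrightarrow> x < y \<Longrightarrow> PR.h x < PR.g y" using PR.hg by auto
    show "PR.g 0 = Inf R" by (rule PR.g0)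
    show "PR.h 1 = Sup R" by (rule PR.h1)
    show "\<And>x z. x \<in> {0..1} \<Longrightarrow> z \<in> R \<Longrightarrow> z < PR.g x \<Longrightarrow> \<exists>y\<in>{0..1}. y < x \<and> z < PR.g y"
    proof -
      fix x z assume a: "x \<in> {0..1::real}" "z \<in> R" "z < PR.g x"
      then obtain y where "0 \<le> y" "y < x" "z < PR.g y" using PR.gl[of x z] by auto
      then show "\<exists>y\<in>{0..1}. y < x \<and> z < PR.g y" using a by (intro bexI[of _ y]) auto
    qed
    show "\<And>x z. x \<in> {0..1} \<Longrightarrow> z \<in> R \<Longrightarrow> PR.h x < z \<Longrightarrow> \<exists>y\<in>{0..1}. x < y \<and> PR.h y < z"
    proof -
      fix x z assume a: "x \<in> {0..1::real}" "z \<in> R" "PR.h x < z"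
      then obtain y where "x < y" "y \<le> 1" "PR.h y < z" using PR.hr[of x z] by auto
      then show "\<exists>y\<in>{0..1}. x < y \<and> PR.h y < z" using a by (intro bexI[of _ y]) auto
    qed
  qed
  show ?thesis by (rule E.main)
qed

end
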